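(* Let $K\subseteq\mathbb{R}^m$ be closed, let $G:\mathbb{R}^n\to\mathbb{R}^m$ be second-order gph-regular at $x^*$, let $\Psi=\{x\in\mathbb{R}^n:G(x)\in K\}$ with $x^*\in\Psi$, and suppose that MSCQ for $\Psi$ holds at $x^*$. If $K$ is outer second-order regular at $G(x^* )$ in direction $G'(x^*;d)$, then $\Psi$ is outer second-order regular at $x^*$ in direction $d$. Furthermore, if $K$ is outer second-order regular at $G(x^* )$ (in every direction), then $\Psi$ is outer second-order regular at $x^*$ (in every direction).
   Context: Definitions. For $g:\mathbb{R}^n\to\mathbb{R}^k$: $g'(x;d)=\lim_{t\downarrow0}(g(x+td)-g(x))/t$; $g$ is second-order directionally differentiable at $x$ if for every $d$, $g'(x;d)$ exists and $g''(x;d,w):=\lim_{t\downarrow0}\frac{g(x+td+\frac12t^2w)-g(x)-tg'(x;d)}{\frac12t^2}$ exists for all $w$. $g$ is second-order gph-regular at $x^*$ if it is locally Lipschitz continuous and second-order directionally differentiable at $x^*$ and for every $d$ and every path $w:\mathbb{R}_+\to\mathbb{R}^n$ with $tw(t)\to0$ as $t\downarrow0$ there is $r$ with $\|r(t)\|/t^2\to0$ such that $g(x^*+td+\frac12t^2w(t))=g(x^* )+tg'(x^*;d)+\frac12t^2g''(x^*;d,w(t))+r(t)$ for $t\ge0$. For a set $C$ and $x^*\in C$: tangent cone $\mathcal{T}_C(x^* )=\{d:\exists t_k\downarrow0,d^k\to d,x^*+t_kd^k\in C\}$; for $d\in\mathcal{T}_C(x^* )$, $\mathcal{T}^2_C(x^*;d)=\{w:\exists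 t_k\downarrow0,w^k\to w,x^*+t_kd+\frac12t_k^2w^k\in C\}$ (outer second-order tangent set). $C$ is outer second-order regular at $x^*$ in direction $d$ if for every sequence $x^k=x^*+t_kd+\frac12t_k^2w^k\in C$ with $t_k\downarrow0$ and $t_kw^k\to0$, $\lim_k\mathrm{dist}(w^k,\mathcal{T}^2_C(x^*;d))=0$. MSCQ for $\Psi$ holds at $x^*$ if there are a neighborhood $U$ of $x^*$ and $\kappa>0$ with $\mathrm{dist}(x,\Psi)\le\kappa\,\mathrm{dist}(G(x),K)$ for all $x\in U$. *)

theory Defs
  imports "HOL-Analysis.Analysis"
begin

definition dir_deriv :: "('a::real_normed_vector \<Rightarrow> 'b::real_normed_vector) \<Rightarrow> 'a \<Rightarrow> 'a \<Rightarrow> 'b" where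
  "dir_deriv g x d = Lim (at_right 0) (\<lambda>t::real. (g (x + t *\<^sub>R d) - g x) /\<^sub>R t)"

definition has_dir_deriv :: "('a::real_normed_vector \<Rightarrow> 'b::real_normed_vector) \<Rightarrow> 'a \<Rightarrow> 'a \<Rightarrow> bool" where
  "has_dir_deriv g x d \<longleftrightarrow> (\<exists>v. ((\<lambda>t::real. (g (x + t *\<^sub>R d) - g x) /\<^sub>R t) \<longlongrightarrow> v) (at_right 0))"

definition so_quot :: "('a::real_normed_vector \<Rightarrow> 'b::real_normed_vector) \<Rightarrow> 'a \<Rightarrow> 'a \<Rightarrow> 'a \<Rightarrow> real \<Rightarrow> 'b" where
  "so_quot g x d w t =
     (g (x + t *\<^sub>R d + ((1/2) * t\<^sup>2) *\<^sub>R w) - g x - t *\<^sub>R dir_deriv g x d) /\<^sub>R ((1/2) * t\<^sup>2)"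

definition dir_deriv2 :: "('a::real_normed_vector \<Rightarrow> 'b::real_normed_vector) \<Rightarrow> 'a \<Rightarrow> 'a \<Rightarrow> 'a \<Rightarrow> 'b" where
  "dir_deriv2 g x d w = Lim (at_right 0) (so_quot g x d w)"

definition so_dir_differentiable :: "('a::real_normed_vector \<Rightarrow> 'b::real_normed_vector) \<Rightarrow> 'a \<Rightarrow> bool" where
  "so_dir_differentiable g x \<longleftrightarrow>
     (\<forall>d. has_dir_deriv g x d \<and> (\<forall>w. \<exists>v. (so_quot g x d w \<longlongrightarrow> v) (at_right 0)))"

definition so_gph_regular :: "('a::real_normed_vector \<Rightarrow> 'b::real_normed_vector) \<Rightarrow> 'a \<Rightarrow> bool" where
  "so_gph_regular g x \<longleftrightarrow>
     (\<exists>U L. open U \<and> x \<in> U \<and> L-lipschitz_on U g) \<and>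
     so_dir_differentiable g x \<and>
     (\<forall>d (w :: real \<Rightarrow> 'a). ((\<lambda>t. t *\<^sub>R w t) \<longlongrightarrow> 0) (at_right 0) \<longrightarrow>
        (\<exists>r :: real \<Rightarrow> 'b. ((\<lambda>t. norm (r t) / t\<^sup>2) \<longlongrightarrow> 0) (at_right 0) \<and>
           (\<forall>t\<ge>0. g (x + t *\<^sub>R d + ((1/2) * t\<^sup>2) *\<^sub>R w t)
                 = g x + t *\<^sub>R dir_deriv g x d + ((1/2) * t\<^sup>2) *\<^sub>R dir_deriv2 g x d (w t) + r t)))"

text \<open>Tangent cone and outer second-order tangent set (t_k decreasing to 0 read as t_k > 0 and t_k tending to 0).\<close>
definition tangent_cone :: "'a::real_normed_vector set \<Rightarrow> 'a \<Rightarrow> 'a set" where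
  "tangent_cone C x = {d. \<exists>t dk. (\<forall>k. t k > 0) \<and> t \<longlonglongrightarrow> 0 \<and> dk \<longlonglongrightarrow> d \<and>
                           (\<forall>k. x + t k *\<^sub>R dk k \<in> C)}"

definition so_tangent_set :: "'a::real_normed_vector set \<Rightarrow> 'a \<Rightarrow> 'a \<Rightarrow> 'a set" where
  "so_tangent_set C x d = {w. \<exists>t wk. (\<forall>k. t k > 0) \<and> t \<longlonglongrightarrow> 0 \<and> wk \<longlonglongrightarrow> w \<and>
                           (\<forall>k. x + t k *\<^sub>R d + ((1/2) * (t k)\<^sup>2) *\<^sub>R wk k \<in> C)}"

text \<open>Outer second-order regularity in direction d. Since dist(w, empty) = +infinity in the paper's
  convention but infdist w {} = 0 in Isabelle, nonemptiness of the tangent set is required explicitly.\<close>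
definition outer_so_regular :: "'a::real_normed_vector set \<Rightarrow> 'a \<Rightarrow> 'a \<Rightarrow> bool" where
  "outer_so_regular C x d \<longleftrightarrow>
     (\<forall>t w. (\<forall>k. t k > 0) \<and> t \<longlonglongrightarrow> 0 \<and> (\<lambda>k. t k *\<^sub>R w k) \<longlonglongrightarrow> 0 \<and>
            (\<forall>k. x + t k *\<^sub>R d + ((1/2) * (t k)\<^sup>2) *\<^sub>R w k \<in> C) \<longrightarrow>
        so_tangent_set C x d \<noteq> {} \<and> (\<lambda>k. infdist (w k) (so_tangent_set C x d)) \<longlonglongrightarrow> 0)"

definition MSCQ :: "('a::real_normed_vector \<Rightarrow> 'b::real_normed_vector) \<Rightarrow> 'b set \<Rightarrow> 'a \<Rightarrow> bool" where
  "MSCQ G K x \<longleftrightarrow> (\<exists>U \<kappa>. open U \<and> x \<in> U \<and> \<kappa> > 0 \<and>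
      (\<forall>y\<in>U. infdist y {z. G z \<in> K} \<le> \<kappa> * infdist (G y) K))"

end

theory Submission
  imports Defs
begin

lemma infdist_lt_ex:
  assumes "A \<noteq> {}" "infdist x A < e"
  shows "\<exists>a\<in>A. dist x a < e"
proof -
  have "bdd_below ((\<lambda>a. dist x a) ` A)" by (rule bdd_belowI[of _ 0]) auto
  then show ?thesis using assms by (simp add: infdist_notempty cINF_less_iff)
qed

lemma exp_const:
  assumes "so_gph_regular G xs"
  shows "\<exists>r. ((\<lambda>t. norm (r t) / t\<^sup>2) \<longlongrightarrow> 0) (at_right 0) \<and>
     (\<forall>t\<ge>0. G (xs + t *\<^sub>R d + ((1/2) * t\<^sup>2) *\<^sub>R w)
        = G xs + t *\<^sub>R dir_deriv G xs d + ((1/2) * t\<^sup>2) *\<^sub>R dir_deriv2 G xs d w + r t)"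
proof -
  have "((\<lambda>t::real. t *\<^sub>R w) \<longlongrightarrow> 0) (at_right 0)"
    using tendsto_scaleR[OF tendsto_ident_at[of 0 "{0<..}"] tendsto_const[of w]] by simp
  moreover have "\<forall>d (w :: real \<Rightarrow> _). ((\<lambda>t. t *\<^sub>R w t) \<longlongrightarrow> 0) (at_right 0) \<longrightarrow>
        (\<exists>r. ((\<lambda>t. norm (r t) / t\<^sup>2) \<longlongrightarrow> 0) (at_right 0) \<and>
           (\<forall>t\<ge>0. G (xs + t *\<^sub>R d + ((1/2) * t\<^sup>2) *\<^sub>R w t)
                 = G xs + t *\<^sub>R dir_deriv G xs d + ((1/2) * t\<^sup>2) *\<^sub>R dir_deriv2 G xs d (w t) + r t))"
    using assms unfolding so_gph_regular_def by blast
  ultimately show ?thesis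
    by (rule_tac mp[OF spec[OF spec[of _ d], of _ "\<lambda>t. w"]]) auto
qed

lemma seq_right:
  fixes s :: "nat \<Rightarrow> real"
  assumes "\<forall>k. s k > 0" "s \<longlonglongrightarrow> 0"
  shows "filterlim s (at_right 0) sequentially"
proof -
  have "\<forall>\<^sub>F x in sequentially. s x \<in> {0<..} \<and> s x \<noteq> 0"
    using assms(1) by (intro always_eventually) (metis greaterThan_iff less_irrefl)
  then show ?thesis using assms(2) by (simp add: filterlim_at)
qed

lemma comp_right:
  fixes s :: "nat \<Rightarrow> real"
  assumes "((\<lambda>t. norm (r t) / t\<^sup>2) \<longlongrightarrow> 0) (at_right 0)" "\<forall>k. s k > 0" "s \<longlonglongrightarrow> 0"
  shows "(\<lambda>k. norm (r (s k)) / (s k)\<^sup>2) \<longlonglongrightarrow> 0"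
  using filterlim_compose[OF assms(1) seq_right[OF assms(2,3)]] .

lemma g2_lip:
  assumes "so_gph_regular G xs"
  obtains L where "L \<ge> 0"
    "\<And>w w'. norm (dir_deriv2 G xs d w - dir_deriv2 G xs d w') \<le> L * norm (w - w')"
proof -
  obtain U L where U: "open U" "xs \<in> U" "L-lipschitz_on U G"
    using assms unfolding so_gph_regular_def by blast
  have L0: "L \<ge> 0" using U(3) lipschitz_on_def by blast
  have "norm (dir_deriv2 G xs d w - dir_deriv2 G xs d w') \<le> L * norm (w - w')" for w w'
  proof -
    obtain r1 where r1: "((\<lambda>t. norm (r1 t) / t\<^sup>2) \<longlongrightarrow> 0) (at_right 0)"
      "\<And>t. t\<ge>0 \<Longrightarrow> G (xs + t *\<^sub>R d + ((1/2) * t\<^sup>2) *\<^sub>R w)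
        = G xs + t *\<^sub>R dir_deriv G xs d + ((1/2) * t\<^sup>2) *\<^sub>R dir_deriv2 G xs d w + r1 t"
      using exp_const[OF assms, of d w] by blast
    obtain r2 where r2: "((\<lambda>t. norm (r2 t) / t\<^sup>2) \<longlongrightarrow> 0) (at_right 0)"
      "\<And>t. t\<ge>0 \<Longrightarrow> G (xs + t *\<^sub>R d + ((1/2) * t\<^sup>2) *\<^sub>R w')
        = G xs + t *\<^sub>R dir_deriv G xs d + ((1/2) * t\<^sup>2) *\<^sub>R dir_deriv2 G xs d w' + r2 t"
      using exp_const[OF assms, of d w'] by blast
    have p: "((\<lambda>t. xs + t *\<^sub>R d + ((1/2) * t\<^sup>2) *\<^sub>R v) \<longlongrightarrow> xs) (at_right 0)" for v
    proof -
      have "((\<lambda>t. xs + t *\<^sub>R d + ((1/2) * t\<^sup>2) *\<^sub>R v) \<longlongrightarrow> xs + 0 *\<^sub>R d + ((1/2) * 0\<^sup>2) *\<^sub>R v) (at_right 0)"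
        by (intro tendsto_intros)
      then show ?thesis by simp
    qed
    have ev1: "\<forall>\<^sub>F t in at_right 0. xs + t *\<^sub>R d + ((1/2) * t\<^sup>2) *\<^sub>R w \<in> U"
      using topological_tendstoD[OF p U(1) U(2)] .
    have ev2: "\<forall>\<^sub>F t in at_right 0. xs + t *\<^sub>R d + ((1/2) * t\<^sup>2) *\<^sub>R w' \<in> U"
      using topological_tendstoD[OF p U(1) U(2)] .
    have ev: "\<forall>\<^sub>F t in at_right 0. norm (dir_deriv2 G xs d w - dir_deriv2 G xs d w')
        \<le> L * norm (w - w') + 2 * (norm (r1 t) / t\<^sup>2 + norm (r2 t) / t\<^sup>2)"
      using ev1 ev2 eventually_at_right_less[of "0::real"]
    proof eventually_elim
      case (elim t)
      define h where "h = (1/2) * t\<^sup>2"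
      have h: "h > 0" using elim(3) by (simp add: h_def)
      define D where "D = dir_deriv2 G xs d w - dir_deriv2 G xs d w'"
      have e: "G (xs + t *\<^sub>R d + h *\<^sub>R w) - G (xs + t *\<^sub>R d + h *\<^sub>R w') = h *\<^sub>R D + (r1 t - r2 t)"
        using r1(2)[of t] r2(2)[of t] elim(3) unfolding h_def D_def by (simp add: algebra_simps)
      have "norm (G (xs + t *\<^sub>R d + h *\<^sub>R w) - G (xs + t *\<^sub>R d + h *\<^sub>R w'))
          \<le> L * norm ((xs + t *\<^sub>R d + h *\<^sub>R w) - (xs + t *\<^sub>R d + h *\<^sub>R w'))"
        using U(3) elim(1,2) unfolding lipschitz_on_def dist_norm h_def by blast
      also have "(xs + t *\<^sub>R d + h *\<^sub>R w) - (xs + t *\<^sub>R d + h *\<^sub>R w') = h *\<^sub>R (w - w')"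
        by (simp add: algebra_simps)
      finally have 1: "norm (h *\<^sub>R D + (r1 t - r2 t)) \<le> L * (h * norm (w - w'))"
        using e h by simp
      have "h * norm D = norm (h *\<^sub>R D)" using h by simp
      also have "\<dots> \<le> norm (h *\<^sub>R D + (r1 t - r2 t)) + norm (r1 t) + norm (r2 t)"
        using norm_triangle_ineq4[of "h *\<^sub>R D + (r1 t - r2 t)" "r1 t - r2 t"]
          norm_triangle_ineq4[of "r1 t" "r2 t"] by simp
      finally have 2: "h * norm D \<le> h * (L * norm (w - w')) + (norm (r1 t) + norm (r2 t))"
        using 1 by (simp add: algebra_simps)
      have "norm D \<le> L * norm (w - w') + (norm (r1 t) + norm (r2 t)) / h"
        using 2 h by (simp add: field_simps)
      also have "(norm (r1 t) + norm (r2 t)) / h = 2 * (norm (r1 t) / t\<^sup>2 + norm (r2 t) / t\<^sup>2)"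
        unfolding h_def using elim(3) by (simp add: field_simps)
      finally show ?case unfolding D_def .
    qed
    have lim: "((\<lambda>t. L * norm (w - w') + 2 * (norm (r1 t) / t\<^sup>2 + norm (r2 t) / t\<^sup>2)) \<longlongrightarrow>
        L * norm (w - w') + 2 * (0 + 0)) (at_right 0)"
      by (intro tendsto_intros r1(1) r2(1))
    show ?thesis
      using tendsto_le[OF trivial_limit_at_right_real lim tendsto_const ev] by simp
  qed
  with L0 that show ?thesis by blast
qed

lemma subseq_dec:
  fixes t :: "nat \<Rightarrow> real"
  assumes "\<forall>k. t k > 0" "t \<longlonglongrightarrow> 0" "frequently P sequentially"
  obtains \<phi> :: "nat \<Rightarrow> nat" where "strict_mono \<phi>" "inj (t \<circ> \<phi>)" "\<forall>k. P (\<phi> k)"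
proof -
  have ex: "\<exists>k>m. t k < c \<and> P k" if "c > 0" for m c
  proof -
    have "\<forall>\<^sub>F k in sequentially. t k < c" using order_tendstoD(2)[OF assms(2) that] .
    then obtain N where N: "\<forall>k\<ge>N. t k < c" unfolding eventually_sequentially by blast
    obtain n where "n \<ge> max N (Suc m)" "P n" using assms(3) unfolding frequently_sequentially by blast
    then show ?thesis using N by (intro exI[of _ n]) auto
  qed
  obtain k0 where k0: "P k0" using assms(3) unfolding frequently_sequentially by blast
  define \<phi> where "\<phi> = rec_nat k0 (\<lambda>_ m. SOME k. k > m \<and> t k < t m \<and> P k)"
  have \<phi>0: "\<phi> 0 = k0" and \<phi>S: "\<phi> (Suc n) = (SOME k. k > \<phi> n \<and> t k < t (\<phi> n) \<and> P k)" for n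
    by (simp_all add: \<phi>_def)
  have step: "\<phi> (Suc n) > \<phi> n \<and> t (\<phi> (Suc n)) < t (\<phi> n) \<and> P (\<phi> (Suc n))" for n
    unfolding \<phi>S by (rule someI_ex) (rule ex, use assms(1) in auto)
  have sm: "strict_mono \<phi>" using step by (simp add: strict_mono_Suc_iff)
  have P: "\<forall>k. P (\<phi> k)"
  proof
    fix k show "P (\<phi> k)" using k0 step \<phi>0 by (cases k) auto
  qed
  have "strict_mono (\<lambda>n. - t (\<phi> n))" using step by (simp add: strict_mono_Suc_iff)
  then have "inj (\<lambda>n. - t (\<phi> n))" by (rule strict_mono_imp_inj_on)
  then have "inj (t \<circ> \<phi>)" by (auto simp: inj_def)
  then show ?thesis by (rule that[OF sm _ P])
qed

lemma core:
  fixes G :: "'n::euclidean_space \<Rightarrow> 'm::euclidean_space"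
  assumes reg: "so_gph_regular G xs"
    and KR: "outer_so_regular K (G xs) (dir_deriv G xs d)"
    and s: "\<forall>k. s k > 0" "s \<longlonglongrightarrow> 0" "inj s"
    and su: "(\<lambda>k. s k *\<^sub>R u k) \<longlonglongrightarrow> 0"
    and mem: "\<forall>k. G (xs + s k *\<^sub>R d + ((1/2) * (s k)\<^sup>2) *\<^sub>R u k) \<in> K"
  shows "so_tangent_set K (G xs) (dir_deriv G xs d) \<noteq> {} \<and>
    (\<lambda>k. infdist (dir_deriv2 G xs d (u k)) (so_tangent_set K (G xs) (dir_deriv G xs d))) \<longlonglongrightarrow> 0"
proof -
  define T where "T = so_tangent_set K (G xs) (dir_deriv G xs d)"
  define p where "p t = (if \<exists>k. s k = t then u (THE k. s k = t) else 0)" for t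
  have ps: "p (s k) = u k" for k
  proof -
    have "(THE k'. s k' = s k) = k" using s(3) by (auto simp: inj_eq)
    then show ?thesis unfolding p_def by auto
  qed
  have plim: "((\<lambda>t. t *\<^sub>R p t) \<longlongrightarrow> 0) (at_right 0)"
  proof (rule tendstoI)
    fix \<epsilon> :: real assume e: "\<epsilon> > 0"
    obtain N where N: "\<forall>k\<ge>N. norm (s k *\<^sub>R u k) < \<epsilon>"
      using su e unfolding LIMSEQ_iff by auto
    define \<delta> where "\<delta> = Min (insert 1 (s ` {..<N}))"
    have \<delta>: "\<delta> > 0" using s(1) by (simp add: \<delta>_def)
    have \<delta>le: "k < N \<Longrightarrow> \<delta> \<le> s k" for k by (simp add: \<delta>_def)
    have "\<forall>t>0. t < \<delta> \<longrightarrow> dist (t *\<^sub>R p t) 0 < \<epsilon>"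
    proof (intro allI impI)
      fix t :: real assume t: "t > 0" "t < \<delta>"
      show "dist (t *\<^sub>R p t) 0 < \<epsilon>"
      proof (cases "\<exists>k. s k = t")
        case True
        then obtain k where k: "s k = t" by blast
        have "k \<ge> N" using \<delta>le[of k] k t by force
        then show ?thesis using N k ps[of k] by auto
      next
        case False
        then show ?thesis using e by (simp add: p_def)
      qed
    qed
    then show "\<forall>\<^sub>F t in at_right 0. dist (t *\<^sub>R p t) 0 < \<epsilon>"
      unfolding eventually_at_right[of 0 1, OF zero_less_one] using \<delta> by blast
  qed
  have "\<forall>d (w :: real \<Rightarrow> _). ((\<lambda>t. t *\<^sub>R w t) \<longlongrightarrow> 0) (at_right 0) \<longrightarrow>
        (\<exists>r. ((\<lambda>t. norm (r t) / t\<^sup>2) \<longlongrightarrow> 0) (at_right 0) \<and>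
           (\<forall>t\<ge>0. G (xs + t *\<^sub>R d + ((1/2) * t\<^sup>2) *\<^sub>R w t)
                 = G xs + t *\<^sub>R dir_deriv G xs d + ((1/2) * t\<^sup>2) *\<^sub>R dir_deriv2 G xs d (w t) + r t))"
    using reg unfolding so_gph_regular_def by blast
  then obtain r where r: "((\<lambda>t. norm (r t) / t\<^sup>2) \<longlongrightarrow> 0) (at_right 0)"
     "\<forall>t\<ge>0. G (xs + t *\<^sub>R d + ((1/2) * t\<^sup>2) *\<^sub>R p t)
                 = G xs + t *\<^sub>R dir_deriv G xs d + ((1/2) * t\<^sup>2) *\<^sub>R dir_deriv2 G xs d (p t) + r t"
    using plim by blast
  define e where "e k = (2 / (s k)\<^sup>2) *\<^sub>R r (s k)" for k
  have ne: "norm (e k) = 2 * (norm (r (s k)) / (s k)\<^sup>2)" for k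
    unfolding e_def by simp
  have "(\<lambda>k. 2 * (norm (r (s k)) / (s k)\<^sup>2)) \<longlonglongrightarrow> 2 * 0"
    by (intro tendsto_intros comp_right[OF r(1) s(1,2)])
  then have en: "(\<lambda>k. norm (e k)) \<longlonglongrightarrow> 0" unfolding ne by simp
  then have elim: "e \<longlonglongrightarrow> 0" by (simp add: tendsto_norm_zero_iff)
  define z where "z k = dir_deriv2 G xs d (u k) + e k" for k
  have zmem: "G xs + s k *\<^sub>R dir_deriv G xs d + ((1/2) * (s k)\<^sup>2) *\<^sub>R z k \<in> K" for k
  proof -
    have sk: "s k > 0" using s(1) by blast
    have "((1/2) * (s k)\<^sup>2) *\<^sub>R e k = r (s k)" using sk unfolding e_def by (simp add: field_simps)
    then have "G xs + s k *\<^sub>R dir_deriv G xs d + ((1/2) * (s k)\<^sup>2) *\<^sub>R z k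
       = G (xs + s k *\<^sub>R d + ((1/2) * (s k)\<^sup>2) *\<^sub>R u k)"
      using r(2)[rule_format, of "s k"] sk ps[of k] unfolding z_def by (simp add: algebra_simps)
    then show ?thesis using mem by simp
  qed
  obtain L where L: "L \<ge> 0"
    "\<And>w w'. norm (dir_deriv2 G xs d w - dir_deriv2 G xs d w') \<le> L * norm (w - w')"
    using g2_lip[OF reg, of d] by blast
  have sz: "(\<lambda>k. s k *\<^sub>R z k) \<longlonglongrightarrow> 0"
  proof (rule Lim_null_comparison)
    show "\<forall>\<^sub>F k in sequentially. norm (s k *\<^sub>R z k) \<le>
       s k * norm (dir_deriv2 G xs d 0) + L * norm (s k *\<^sub>R u k) + s k * norm (e k)"
    proof (intro always_eventually allI)
      fix k
      have sk: "s k > 0" using s(1) by blast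
      have "norm (dir_deriv2 G xs d (u k)) \<le> norm (dir_deriv2 G xs d 0) + L * norm (u k)"
        using L(2)[of "u k" 0] norm_triangle_ineq2[of "dir_deriv2 G xs d (u k)" "dir_deriv2 G xs d 0"]
        by simp
      then have "norm (z k) \<le> norm (dir_deriv2 G xs d 0) + L * norm (u k) + norm (e k)"
        unfolding z_def using norm_triangle_ineq[of "dir_deriv2 G xs d (u k)" "e k"] by simp
      then have "s k * norm (z k) \<le> s k * (norm (dir_deriv2 G xs d 0) + L * norm (u k) + norm (e k))"
        using sk by (simp add: mult_left_mono)
      then show "norm (s k *\<^sub>R z k) \<le>
       s k * norm (dir_deriv2 G xs d 0) + L * norm (s k *\<^sub>R u k) + s k * norm (e k)"
        using sk by (simp add: algebra_simps)
    qed
    have "(\<lambda>k. s k * norm (dir_deriv2 G xs d 0) + L * norm (s k *\<^sub>R u k) + s k * norm (e k))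
       \<longlonglongrightarrow> 0 * norm (dir_deriv2 G xs d 0) + L * norm (0::'n) + 0 * 0"
      by (intro tendsto_intros s(2) su en)
    then show "(\<lambda>k. s k * norm (dir_deriv2 G xs d 0) + L * norm (s k *\<^sub>R u k) + s k * norm (e k))
       \<longlonglongrightarrow> 0" by simp
  qed
  have "(\<forall>k. s k > 0) \<and> s \<longlonglongrightarrow> 0 \<and> (\<lambda>k. s k *\<^sub>R z k) \<longlonglongrightarrow> 0 \<and>
     (\<forall>k. G xs + s k *\<^sub>R dir_deriv G xs d + ((1/2) * (s k)\<^sup>2) *\<^sub>R z k \<in> K)"
    using s sz zmem by blast
  then have KK: "T \<noteq> {}" "(\<lambda>k. infdist (z k) T) \<longlonglongrightarrow> 0"
    using KR unfolding outer_so_regular_def T_def by blast+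
  have "(\<lambda>k. infdist (dir_deriv2 G xs d (u k)) T) \<longlonglongrightarrow> 0"
  proof (rule Lim_null_comparison)
    show "\<forall>\<^sub>F k in sequentially. norm (infdist (dir_deriv2 G xs d (u k)) T) \<le> infdist (z k) T + norm (e k)"
    proof (intro always_eventually allI)
      fix k
      have "infdist (dir_deriv2 G xs d (u k)) T \<le> infdist (z k) T + dist (dir_deriv2 G xs d (u k)) (z k)"
        by (rule infdist_triangle)
      then show "norm (infdist (dir_deriv2 G xs d (u k)) T) \<le> infdist (z k) T + norm (e k)"
        unfolding z_def by (simp add: dist_norm infdist_nonneg)
    qed
    show "(\<lambda>k. infdist (z k) T + norm (e k)) \<longlonglongrightarrow> 0"
      using tendsto_add[OF KK(2) en] by simp
  qed
  then show ?thesis using KK(1) unfolding T_def by blast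
qed

lemma tangent_approx:
  fixes G :: "'n::euclidean_space \<Rightarrow> 'm::euclidean_space"
  assumes reg: "so_gph_regular G xs"
    and xsK: "G xs \<in> K"
    and U: "open U" "xs \<in> U" "\<kappa> > 0"
      "\<forall>y\<in>U. infdist y {z. G z \<in> K} \<le> \<kappa> * infdist (G y) K"
    and ne: "so_tangent_set K (G xs) (dir_deriv G xs d) \<noteq> {}"
    and eta: "\<eta> > 0"
  shows "\<exists>u\<in>so_tangent_set {x. G x \<in> K} xs d.
     norm (u - w) \<le> \<kappa> * (infdist (dir_deriv2 G xs d w) (so_tangent_set K (G xs) (dir_deriv G xs d)) + \<eta>) + \<eta>"
proof -
  define T where "T = so_tangent_set K (G xs) (dir_deriv G xs d)"
  define D where "D = infdist (dir_deriv2 G xs d w) T"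
  define g1 where "g1 = dir_deriv G xs d"
  define a where "a = dir_deriv2 G xs d w"
  define \<Psi> where "\<Psi> = {x. G x \<in> K}"
  define R where "R = \<kappa> * (D + \<eta>) + \<eta>"
  obtain v where v: "v \<in> T" "dist a v < D + \<eta>"
    using infdist_lt_ex[of T a "D + \<eta>"] ne eta unfolding T_def D_def a_def by auto
  from v(1) obtain s vk where s: "\<forall>k. s k > 0" "s \<longlonglongrightarrow> 0" "vk \<longlonglongrightarrow> v"
     "\<forall>k. G xs + s k *\<^sub>R g1 + ((1/2) * (s k)\<^sup>2) *\<^sub>R vk k \<in> K"
    unfolding T_def so_tangent_set_def g1_def by blast
  obtain r where r: "((\<lambda>t. norm (r t) / t\<^sup>2) \<longlongrightarrow> 0) (at_right 0)"
     "\<forall>t\<ge>0. G (xs + t *\<^sub>R d + ((1/2) * t\<^sup>2) *\<^sub>R w) = G xs + t *\<^sub>R g1 + ((1/2) * t\<^sup>2) *\<^sub>R a + r t"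
    using exp_const[OF reg, of d w] unfolding g1_def a_def by blast
  have er: "(\<lambda>k. norm (r (s k)) / (s k)\<^sup>2) \<longlonglongrightarrow> 0" by (rule comp_right[OF r(1) s(1,2)])
  define y where "y k = xs + s k *\<^sub>R d + ((1/2) * (s k)\<^sup>2) *\<^sub>R w" for k
  have "y \<longlonglongrightarrow> xs + 0 *\<^sub>R d + ((1/2) * 0\<^sup>2) *\<^sub>R w"
    unfolding y_def by (intro tendsto_intros s(2))
  then have "y \<longlonglongrightarrow> xs" by simp
  then have evU: "\<forall>\<^sub>F k in sequentially. y k \<in> U" using topological_tendstoD U(1,2) by blast
  have Pne: "\<Psi> \<noteq> {}" using xsK unfolding \<Psi>_def by blast
  have "\<exists>q\<in>\<Psi>. dist (y k) q < infdist (y k) \<Psi> + (1/2) * (s k)\<^sup>2 * \<eta>" for k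
  proof -
    have "s k > 0" using s(1) by blast
    then have "0 < (s k)\<^sup>2 * \<eta>" using eta by simp
    then show ?thesis using infdist_nonneg[of "y k" \<Psi>] by (intro infdist_lt_ex[OF Pne]) simp
  qed
  then obtain \<psi> where \<psi>: "\<And>k. \<psi> k \<in> \<Psi>" "\<And>k. dist (y k) (\<psi> k) < infdist (y k) \<Psi> + (1/2) * (s k)\<^sup>2 * \<eta>"
    by metis
  define uk where "uk k = (2 / (s k)\<^sup>2) *\<^sub>R (\<psi> k - xs - s k *\<^sub>R d)" for k
  have \<psi>eq: "xs + s k *\<^sub>R d + ((1/2) * (s k)\<^sup>2) *\<^sub>R uk k = \<psi> k" for k
  proof -
    have "s k > 0" using s(1) by blast
    then show ?thesis by (simp add: uk_def algebra_simps)
  qed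
  have unorm: "norm (uk k - w) = (2 / (s k)\<^sup>2) * dist (y k) (\<psi> k)" for k
  proof -
    have sk: "s k > 0" using s(1) by blast
    have "uk k - w = (2 / (s k)\<^sup>2) *\<^sub>R (\<psi> k - y k)"
      using sk unfolding uk_def y_def by (simp add: algebra_simps)
    then show ?thesis by (simp add: dist_norm norm_minus_commute)
  qed
  have bnd: "norm (uk k - w) < \<kappa> * (norm (a - vk k) + 2 * (norm (r (s k)) / (s k)\<^sup>2)) + \<eta>"
    if yU: "y k \<in> U" for k
  proof -
    have sk: "s k > 0" using s(1) by blast
    define h where "h = (1/2) * (s k)\<^sup>2"
    have h: "h > 0" using sk by (simp add: h_def)
    have "G (y k) - (G xs + s k *\<^sub>R g1 + ((1/2) * (s k)\<^sup>2) *\<^sub>R vk k) = h *\<^sub>R (a - vk k) + r (s k)"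
      using r(2)[rule_format, of "s k"] sk unfolding y_def h_def by (simp add: algebra_simps)
    then have "dist (G (y k)) (G xs + s k *\<^sub>R g1 + ((1/2) * (s k)\<^sup>2) *\<^sub>R vk k) \<le> h * norm (a - vk k) + norm (r (s k))"
      using norm_triangle_ineq[of "h *\<^sub>R (a - vk k)" "r (s k)"] h by (simp add: dist_norm)
    then have "infdist (G (y k)) K \<le> h * norm (a - vk k) + norm (r (s k))"
      using infdist_le[OF s(4)[rule_format, of k], of "G (y k)"] by linarith
    then have "infdist (y k) \<Psi> \<le> \<kappa> * (h * norm (a - vk k) + norm (r (s k)))"
      using U(4) yU U(3) unfolding \<Psi>_def by (meson mult_left_mono less_imp_le order_trans)
    then have "dist (y k) (\<psi> k) < \<kappa> * (h * norm (a - vk k) + norm (r (s k))) + h * \<eta>"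
      using \<psi>(2)[of k] unfolding h_def by linarith
    then have "(1/h) * dist (y k) (\<psi> k) < (1/h) * (\<kappa> * (h * norm (a - vk k) + norm (r (s k))) + h * \<eta>)"
      using h by (intro mult_strict_left_mono) simp_all
    also have "\<dots> = \<kappa> * (norm (a - vk k) + 2 * (norm (r (s k)) / (s k)\<^sup>2)) + \<eta>"
      using h sk unfolding h_def by (simp add: field_simps)
    finally show ?thesis using unorm[of k] unfolding h_def by simp
  qed
  have lim: "(\<lambda>k. \<kappa> * (norm (a - vk k) + 2 * (norm (r (s k)) / (s k)\<^sup>2)) + \<eta>)
      \<longlonglongrightarrow> \<kappa> * (norm (a - v) + 2 * 0) + \<eta>"
    by (intro tendsto_intros s(3) er)
  have "\<kappa> * (norm (a - v) + 2 * 0) + \<eta> < R"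
    using v(2) U(3) unfolding R_def by (simp add: dist_norm)
  then have "\<forall>\<^sub>F k in sequentially. \<kappa> * (norm (a - vk k) + 2 * (norm (r (s k)) / (s k)\<^sup>2)) + \<eta> < R"
    using order_tendstoD(2)[OF lim] by blast
  with evU have "\<forall>\<^sub>F k in sequentially. norm (uk k - w) < R"
    by eventually_elim (use bnd in fastforce)
  then obtain N where N: "\<forall>k\<ge>N. norm (uk k - w) < R" unfolding eventually_sequentially by blast
  have inb: "\<forall>k. uk (k + N) \<in> cball w R"
    using N by (auto simp: dist_norm norm_minus_commute intro: less_imp_le)
  obtain l \<phi> where l: "l \<in> cball w R" "strict_mono \<phi>" "((\<lambda>k. uk (k + N)) \<circ> \<phi>) \<longlonglongrightarrow> l"
    using compact_imp_seq_compact[OF compact_cball[of w R]] inb unfolding seq_compact_def by metis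
  define \<sigma> where "\<sigma> k = \<phi> k + N" for k
  have sig: "strict_mono \<sigma>" using l(2) by (simp add: strict_mono_def \<sigma>_def)
  have "l \<in> so_tangent_set \<Psi> xs d"
    unfolding so_tangent_set_def
  proof (intro CollectI exI conjI allI)
    show "(s \<circ> \<sigma>) k > 0" for k using s(1) by simp
    show "(s \<circ> \<sigma>) \<longlonglongrightarrow> 0" by (rule LIMSEQ_subseq_LIMSEQ[OF s(2) sig])
    show "(uk \<circ> \<sigma>) \<longlonglongrightarrow> l" using l(3) by (simp add: o_def \<sigma>_def)
    show "xs + (s \<circ> \<sigma>) k *\<^sub>R d + ((1/2) * ((s \<circ> \<sigma>) k)\<^sup>2) *\<^sub>R (uk \<circ> \<sigma>) k \<in> \<Psi>" for k
      using \<psi>eq[of "\<sigma> k"] \<psi>(1)[of "\<sigma> k"] by simp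
  qed
  moreover have "norm (l - w) \<le> R" using l(1) by (simp add: dist_norm norm_minus_commute)
  ultimately show ?thesis unfolding R_def D_def T_def \<Psi>_def a_def by blast
qed

lemma infdist_bound:
  fixes G :: "'n::euclidean_space \<Rightarrow> 'm::euclidean_space"
  assumes reg: "so_gph_regular G xs"
    and xsK: "G xs \<in> K"
    and U: "open U" "xs \<in> U" "\<kappa> > 0"
      "\<forall>y\<in>U. infdist y {z. G z \<in> K} \<le> \<kappa> * infdist (G y) K"
    and ne: "so_tangent_set K (G xs) (dir_deriv G xs d) \<noteq> {}"
  shows "infdist w (so_tangent_set {x. G x \<in> K} xs d)
     \<le> \<kappa> * infdist (dir_deriv2 G xs d w) (so_tangent_set K (G xs) (dir_deriv G xs d))"
proof (rule field_le_epsilon)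
  fix e :: real assume e: "e > 0"
  define \<eta> where "\<eta> = e / (\<kappa> + 1)"
  have eta: "\<eta> > 0" using e U(3) by (simp add: \<eta>_def)
  obtain u where u: "u \<in> so_tangent_set {x. G x \<in> K} xs d"
    "norm (u - w) \<le> \<kappa> * (infdist (dir_deriv2 G xs d w) (so_tangent_set K (G xs) (dir_deriv G xs d)) + \<eta>) + \<eta>"
    using tangent_approx[OF reg xsK U ne eta, of w] by blast
  have "(\<kappa> + 1) * \<eta> = e" unfolding \<eta>_def using U(3) by simp
  then have "\<kappa> * \<eta> + \<eta> = e" by (simp add: algebra_simps)
  then have "infdist w (so_tangent_set {x. G x \<in> K} xs d) \<le> norm (u - w)"
    using infdist_le[OF u(1), of w] by (simp add: dist_norm norm_minus_commute)
  also have "\<dots> \<le> \<kappa> * infdist (dir_deriv2 G xs d w) (so_tangent_set K (G xs) (dir_deriv G xs d)) + e"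
    using u(2) \<open>\<kappa> * \<eta> + \<eta> = e\<close> by (simp add: algebra_simps)
  finally show "infdist w (so_tangent_set {x. G x \<in> K} xs d)
     \<le> \<kappa> * infdist (dir_deriv2 G xs d w) (so_tangent_set K (G xs) (dir_deriv G xs d)) + e" .
qed

lemma main_dir:
  fixes G :: "'n::euclidean_space \<Rightarrow> 'm::euclidean_space"
  assumes reg: "so_gph_regular G xs"
    and xsK: "G xs \<in> K"
    and U: "open U" "xs \<in> U" "\<kappa> > 0"
      "\<forall>y\<in>U. infdist y {z. G z \<in> K} \<le> \<kappa> * infdist (G y) K"
    and KR: "outer_so_regular K (G xs) (dir_deriv G xs d)"
  shows "outer_so_regular {x. G x \<in> K} xs d"
  unfolding outer_so_regular_def
proof (intro allI impI)
  fix t :: "nat \<Rightarrow> real" and w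
  assume A: "(\<forall>k. 0 < t k) \<and> t \<longlonglongrightarrow> 0 \<and> (\<lambda>k. t k *\<^sub>R w k) \<longlonglongrightarrow> 0 \<and>
       (\<forall>k. xs + t k *\<^sub>R d + (1 / 2 * (t k)\<^sup>2) *\<^sub>R w k \<in> {x. G x \<in> K})"
  define TK where "TK = so_tangent_set K (G xs) (dir_deriv G xs d)"
  define TP where "TP = so_tangent_set {x. G x \<in> K} xs d"
  have sub: "TK \<noteq> {} \<and> (\<lambda>k. infdist (dir_deriv2 G xs d (w (\<phi> k))) TK) \<longlonglongrightarrow> 0"
    if "strict_mono \<phi>" "inj (t \<circ> \<phi>)" for \<phi>
  proof -
    have "((\<lambda>k. t k *\<^sub>R w k) \<circ> \<phi>) \<longlonglongrightarrow> 0" using A that(1) by (intro LIMSEQ_subseq_LIMSEQ) auto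
    then have su: "(\<lambda>k. (t \<circ> \<phi>) k *\<^sub>R (w \<circ> \<phi>) k) \<longlonglongrightarrow> 0" by (simp add: o_def)
    have st: "(t \<circ> \<phi>) \<longlonglongrightarrow> 0" using A that(1) by (intro LIMSEQ_subseq_LIMSEQ) auto
    have "TK \<noteq> {} \<and> (\<lambda>k. infdist (dir_deriv2 G xs d ((w \<circ> \<phi>) k)) TK) \<longlonglongrightarrow> 0"
      unfolding TK_def
      by (rule core[OF reg KR _ st that(2) su]) (use A in auto)
    then show ?thesis by (simp add: o_def)
  qed
  have fr: "frequently (\<lambda>_. True) sequentially" unfolding frequently_sequentially by blast
  have A1: "\<forall>k. 0 < t k" and A2: "t \<longlonglongrightarrow> 0" using A by blast+
  obtain \<phi>0 :: "nat \<Rightarrow> nat" where "strict_mono \<phi>0" "inj (t \<circ> \<phi>0)"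
    by (rule subseq_dec[OF A1 A2 fr]) blast
  then have TKne: "TK \<noteq> {}" using sub by blast
  obtain u0 where "u0 \<in> TP"
    using tangent_approx[OF reg xsK U TKne[unfolded TK_def] zero_less_one, of 0] unfolding TP_def by blast
  then have TPne: "TP \<noteq> {}" by blast
  have bound: "infdist v TP \<le> \<kappa> * infdist (dir_deriv2 G xs d v) TK" for v
    unfolding TP_def TK_def by (rule infdist_bound[OF reg xsK U TKne[unfolded TK_def]])
  have "(\<lambda>k. infdist (w k) TP) \<longlonglongrightarrow> 0"
  proof (rule ccontr)
    assume nc: "\<not> (\<lambda>k. infdist (w k) TP) \<longlonglongrightarrow> 0"
    then obtain \<epsilon> where e: "\<epsilon> > 0" "\<forall>no. \<exists>n\<ge>no. \<not> norm (infdist (w n) TP - 0) < \<epsilon>"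
      unfolding LIMSEQ_iff by blast
    have "frequently (\<lambda>n. \<epsilon> \<le> infdist (w n) TP) sequentially"
      using e(2) unfolding frequently_sequentially by (metis infdist_nonneg abs_of_nonneg real_norm_def diff_zero not_le less_imp_le)
    then obtain \<phi> :: "nat \<Rightarrow> nat" where \<phi>: "strict_mono \<phi>" "inj (t \<circ> \<phi>)" "\<forall>k. \<epsilon> \<le> infdist (w (\<phi> k)) TP"
      by (rule subseq_dec[OF A1 A2]) blast
    have lim0: "(\<lambda>k. \<kappa> * infdist (dir_deriv2 G xs d (w (\<phi> k))) TK) \<longlonglongrightarrow> \<kappa> * 0"
      using sub[OF \<phi>(1,2)] by (intro tendsto_intros) auto
    have "\<forall>\<^sub>F k in sequentially. \<kappa> * infdist (dir_deriv2 G xs d (w (\<phi> k))) TK < \<epsilon>"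
      using order_tendstoD(2)[OF lim0, of \<epsilon>] e(1) by simp
    then obtain k where "\<kappa> * infdist (dir_deriv2 G xs d (w (\<phi> k))) TK < \<epsilon>"
      unfolding eventually_sequentially by blast
    then show False using bound[of "w (\<phi> k)"] \<phi>(3)[rule_format, of k] by linarith
  qed
  then show "so_tangent_set {x. G x \<in> K} xs d \<noteq> {} \<and>
       (\<lambda>k. infdist (w k) (so_tangent_set {x. G x \<in> K} xs d)) \<longlonglongrightarrow> 0"
    using TPne unfolding TP_def by blast
qed

theorem proposition3p3:
  fixes G :: "'n::euclidean_space \<Rightarrow> 'm::euclidean_space"
    and K :: "'m set" and xs :: 'n
  assumes "closed K"
    and "so_gph_regular G xs"
    and "G xs \<in> K"
    and "MSCQ G K xs"
  shows "(\<forall>d. outer_so_regular K (G xs) (dir_deriv G xs d) \<longrightarrow>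
              outer_so_regular {x. G x \<in> K} xs d)
       \<and> ((\<forall>v. outer_so_regular K (G xs) v) \<longrightarrow> (\<forall>d. outer_so_regular {x. G x \<in> K} xs d))"
proof -
  obtain U \<kappa> where U: "open U" "xs \<in> U" "\<kappa> > 0"
      "\<forall>y\<in>U. infdist y {z. G z \<in> K} \<le> \<kappa> * infdist (G y) K"
    using assms(4) unfolding MSCQ_def by blast
  have 1: "\<forall>d. outer_so_regular K (G xs) (dir_deriv G xs d) \<longrightarrow>
              outer_so_regular {x. G x \<in> K} xs d"
    using main_dir[OF assms(2,3) U] by blast
  then show ?thesis by blast
qed

end
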